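(* Let $V$ be a finite-dimensional $k$-vector space with $\dim V\ge2$. There exists a complete flag of $S^2V$ whose stabilizer in $\mathrm{SL}(V)$ (acting via its natural action on $S^2V$) is finite.
   Context: $k$ is an algebraically closed field of characteristic $0$; $S^2V$ is the second symmetric power of $V$. *)

theory Defs
  imports "HOL-Analysis.Analysis" "HOL-Computational_Algebra.Polynomial"
begin

definition alg_closed :: "'k::field itself \<Rightarrow> bool" where
  "alg_closed _ \<longleftrightarrow> (\<forall>p :: 'k poly. 0 < degree p \<longrightarrow> (\<exists>x. poly p x = 0))"

definition mscale :: "'a::field \<Rightarrow> 'a^'n^'n \<Rightarrow> 'a^'n^'n" where
  "mscale c A = (\<chi> i j. c * A $ i $ j)"

global_interpretation msp: vector_space "mscale :: 'a::field \<Rightarrow> 'a^'n^'n \<Rightarrow> 'a^'n^'n"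
  by unfold_locales (simp_all add: mscale_def vec_eq_iff algebra_simps)

text \<open>Model of S^2 V for V = k^n: symmetric n x n matrices
  (v w |-> (v w^T + w v^T)/2); g in GL(V) acts by A |-> g A g^T.\<close>
definition Sym2 :: "('a::field^'n^'n) set" where
  "Sym2 = {A. transpose A = A}"

definition sym2_act :: "'a::field^'n^'n \<Rightarrow> 'a^'n^'n \<Rightarrow> 'a^'n^'n" where
  "sym2_act g A = g ** A ** transpose g"

definition complete_flag :: "(nat \<Rightarrow> ('a::field^'n^'n) set) \<Rightarrow> bool" where
  "complete_flag F \<longleftrightarrow>
     (\<forall>i \<le> msp.dim (Sym2 :: ('a^'n^'n) set).
        msp.subspace (F i) \<and> F i \<subseteq> Sym2 \<and> msp.dim (F i) = i) \<and>
     (\<forall>i < msp.dim (Sym2 :: ('a^'n^'n) set). F i \<subseteq> F (Suc i)) \<and>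
     F (msp.dim (Sym2 :: ('a^'n^'n) set)) = Sym2"

definition flag_stabilizer_SL :: "(nat \<Rightarrow> ('a::field^'n^'n) set) \<Rightarrow> ('a^'n^'n) set" where
  "flag_stabilizer_SL F = {g. det g = 1 \<and>
     (\<forall>i \<le> msp.dim (Sym2 :: ('a^'n^'n) set). sym2_act g ` F i = F i)}"

end

theory Submission imports Defs begin

definition diagm :: "('n::finite \<Rightarrow> 'a::field) \<Rightarrow> 'a^'n^'n" where
  "diagm d = (\<chi> i j. if i = j then d i else 0)"

lemma mscale_mult_left: "mscale c A ** B = mscale c (A ** B)"
  by (simp add: mscale_def matrix_matrix_mult_def vec_eq_iff sum_distrib_left mult.assoc)

lemma mscale_mult_right: "A ** mscale c B = mscale c (A ** B)"
  by (simp add: mscale_def matrix_matrix_mult_def vec_eq_iff sum_distrib_left algebra_simps)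

lemma mscale_mscale: "mscale c (mscale e A) = mscale (c * e) A"
  by (simp add: mscale_def vec_eq_iff)

lemma mscale_one: "mscale 1 A = A"
  by (simp add: mscale_def vec_eq_iff)

lemma diagm_left: "(diagm d ** A) $ i $ j = d i * A $ i $ j"
  by (simp add: diagm_def matrix_matrix_mult_def if_distrib if_distribR sum.delta cong: if_cong)

lemma diagm_right: "(A ** diagm d) $ i $ j = A $ i $ j * d j"
  by (simp add: diagm_def matrix_matrix_mult_def if_distrib if_distribR sum.delta' cong: if_cong)

lemma matrix_add_rdistrib': "((B + C) ** A) = (B ** A) + (C ** A)"
  by (vector matrix_matrix_mult_def sum.distrib[symmetric] field_simps)

lemma det_mscale_one: "det (mscale l (mat 1 :: 'a::field^'n^'n)) = l ^ CARD('n)"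
  by (subst det_diagonal) (auto simp: mscale_def mat_def)

lemma stab_entries:
  fixes g :: "'a::field^'n^'n" and d :: "'n \<Rightarrow> 'a"
  assumes dg: "det g = 1" and inj: "inj d"
    and h1: "g ** transpose g = mscale l (mat 1)"
    and h2: "g ** diagm d ** transpose g = mscale a (mat 1) + mscale b (diagm d)"
  shows "g $ i $ j = 0 \<or> g $ i $ j ^ (2 * CARD('n)) = 1"
proof (cases "g $ i $ j = 0")
  case False
  have "det (g ** transpose g) = 1" using dg by (simp add: det_mul)
  hence ln: "l ^ CARD('n) = 1" by (simp add: h1 det_mscale_one)
  have l0: "l \<noteq> 0"
  proof
    assume "l = 0"
    then have "l ^ CARD('n) = 0" by simp
    with ln show False by simp
  qed
  have "g ** mscale (1/l) (transpose g) = mat 1"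
    using h1 l0 by (simp add: mscale_mult_right mscale_mscale mscale_one)
  hence "mscale (1/l) (transpose g) ** g = mat 1" by (simp add: matrix_left_right_inverse)
  hence "mscale l (mscale (1/l) (transpose g) ** g) = mscale l (mat 1)" by simp
  hence h3: "transpose g ** g = mscale l (mat 1)"
    using l0 by (simp add: mscale_mult_left mscale_mscale mscale_one)
  have "(g ** diagm d ** transpose g) ** g = g ** diagm d ** (transpose g ** g)"
    by (simp add: matrix_mul_assoc)
  also have "\<dots> = mscale l (g ** diagm d)" by (simp add: h3 mscale_mult_right)
  finally have "mscale l (g ** diagm d) = mscale a (mat 1) ** g + mscale b (diagm d) ** g"
    using h2 by (simp add: matrix_add_rdistrib')
  hence key: "\<And>i j. l * (g $ i $ j * d j) = a * g $ i $ j + b * (d i * g $ i $ j)"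
    by (simp add: vec_eq_iff mscale_mult_left) (simp add: mscale_def diagm_left diagm_right)
  have uniq: "\<And>k. g $ i $ k \<noteq> 0 \<Longrightarrow> k = j"
  proof -
    fix k assume "g $ i $ k \<noteq> 0"
    from key[of i k] key[of i j] False this have "l * d k = l * d j"
    proof -
      have "(l * d k) * g $ i $ k = (a + b * d i) * g $ i $ k" using key[of i k] by (simp add: algebra_simps)
      hence 1: "l * d k = a + b * d i" using \<open>g $ i $ k \<noteq> 0\<close> by simp
      have "(l * d j) * g $ i $ j = (a + b * d i) * g $ i $ j" using key[of i j] by (simp add: algebra_simps)
      hence "l * d j = a + b * d i" using False by simp
      with 1 show ?thesis by simp
    qed
    thus "k = j" using l0 inj by (simp add: inj_eq)
  qed
  have "(g ** transpose g) $ i $ i = l" using h1 by (simp add: mscale_def mat_def)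
  moreover have "(g ** transpose g) $ i $ i = (\<Sum>k\<in>UNIV. g $ i $ k * g $ i $ k)"
    by (simp add: matrix_matrix_mult_def transpose_def)
  moreover have "(\<Sum>k\<in>UNIV. g $ i $ k * g $ i $ k) = g $ i $ j * g $ i $ j"
  proof -
    have e: "\<And>k. g $ i $ k * g $ i $ k = (if k = j then g $ i $ j * g $ i $ j else 0)"
      by (case_tac "k = j") (auto dest: uniq)
    have "(\<Sum>k\<in>UNIV. g $ i $ k * g $ i $ k) = (\<Sum>k\<in>UNIV. if k = j then g $ i $ j * g $ i $ j else 0)"
      by (intro sum.cong refl e)
    also have "\<dots> = g $ i $ j * g $ i $ j" by simp
    finally show ?thesis .
  qed
  ultimately have "g $ i $ j ^ 2 = l" by (simp add: power2_eq_square)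
  hence "g $ i $ j ^ (2 * CARD('n)) = 1" using ln by (simp add: power_mult)
  thus ?thesis by simp
qed simp

lemma finite_vecs:
  assumes "finite S"
  shows "finite {v :: 'a^'n. \<forall>i. v $ i \<in> S}"
proof -
  have "{v :: 'a^'n. \<forall>i. v $ i \<in> S} \<subseteq> vec_lambda ` (Pi\<^sub>E UNIV (\<lambda>_. S))"
  proof
    fix v :: "'a^'n" assume "v \<in> {v. \<forall>i. v $ i \<in> S}"
    hence "(\<lambda>i. v $ i) \<in> Pi\<^sub>E UNIV (\<lambda>_. S)" by auto
    moreover have "v = vec_lambda (\<lambda>i. v $ i)" by simp
    ultimately show "v \<in> vec_lambda ` (Pi\<^sub>E UNIV (\<lambda>_. S))" by blast
  qed
  moreover have "finite (Pi\<^sub>E (UNIV :: 'n set) (\<lambda>_. S))" by (intro finite_PiE) (auto simp: assms)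
  ultimately show ?thesis by (meson finite_imageI finite_subset)
qed

lemma finite_mats:
  assumes "finite S"
  shows "finite {g :: 'a^'n^'m. \<forall>i j. g $ i $ j \<in> S}"
proof -
  have "{g :: 'a^'n^'m. \<forall>i j. g $ i $ j \<in> S} = {g. \<forall>i. g $ i \<in> {v :: 'a^'n. \<forall>j. v $ j \<in> S}}"
    by auto
  thus ?thesis using finite_vecs[OF finite_vecs[OF assms]] by simp
qed

lemma finite_unity:
  assumes "m > 0"
  shows "finite {x :: 'a::field. x ^ m = 1}"
proof -
  let ?p = "monom (1::'a) m - 1"
  have "coeff ?p m = 1" using assms by (simp add: coeff_monom)
  hence "?p \<noteq> 0" by (metis coeff_0 zero_neq_one)
  hence "finite {x. poly ?p x = 0}" by (rule poly_roots_finite)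
  moreover have "{x. poly ?p x = 0} = {x :: 'a. x ^ m = 1}" by (auto simp: poly_monom)
  ultimately show ?thesis by simp
qed

definition Emat :: "'n \<Rightarrow> 'n \<Rightarrow> 'a::field^'n^'n" where
  "Emat a b = (\<chi> i j. if i = a \<and> j = b then 1 else 0)"

lemma span_all:
  fixes A :: "'a::field^'n^'n"
  shows "A \<in> msp.span (range (\<lambda>p. Emat (fst p) (snd p)))"
proof -
  have "A = (\<Sum>p\<in>UNIV. mscale (A $ fst p $ snd p) (Emat (fst p) (snd p)))"
  proof (rule vec_eq_iff[THEN iffD2], intro allI)
    fix i
    show "A $ i = (\<Sum>p\<in>UNIV. mscale (A $ fst p $ snd p) (Emat (fst p) (snd p))) $ i"
    proof (rule vec_eq_iff[THEN iffD2], intro allI)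
      fix j
      have "(\<Sum>p\<in>UNIV. mscale (A $ fst p $ snd p) (Emat (fst p) (snd p))) $ i $ j
          = (\<Sum>p\<in>UNIV. if p = (i, j) then A $ i $ j else 0)"
        unfolding sum_component by (intro sum.cong refl) (auto simp: mscale_def Emat_def)
      also have "\<dots> = A $ i $ j" by simp
      finally show "A $ i $ j = (\<Sum>p\<in>UNIV. mscale (A $ fst p $ snd p) (Emat (fst p) (snd p))) $ i $ j"
        by simp
    qed
  qed
  also have "\<dots> \<in> msp.span (range (\<lambda>p. Emat (fst p) (snd p)))"
    by (intro msp.span_sum msp.span_scale msp.span_base) auto
  finally show ?thesis .
qed

lemma subspace_Sym2: "msp.subspace (Sym2 :: ('a::field^'n^'n) set)"
  unfolding msp.subspace_def Sym2_def
  by (auto simp: vec_eq_iff transpose_def mscale_def)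

theorem lemma7p2:
  assumes "alg_closed TYPE('k::field_char_0)"
    and "CARD('n::finite) \<ge> 2"
  shows "\<exists>F :: nat \<Rightarrow> ('k^'n^'n) set. complete_flag F \<and> finite (flag_stabilizer_SL F)"
proof -
  obtain f :: "'n \<Rightarrow> nat" and n0 where "f ` UNIV = {i. i < n0}" "inj_on f UNIV"
    using finite_imp_inj_to_nat_seg[of "UNIV :: 'n set"] by auto
  hence injf: "inj f" by simp
  define d :: "'n \<Rightarrow> 'k" where "d = (\<lambda>i. of_nat (f i))"
  have injd: "inj d" using injf unfolding d_def inj_def by simp
  obtain i0 i1 :: 'n where i01: "i0 \<noteq> i1"
    using assms(2) card_le_Suc0_iff_eq[of "UNIV :: 'n set"] by fastforce
  define I :: "'k^'n^'n" where "I = mat 1"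
  define D :: "'k^'n^'n" where "D = diagm d"
  have I0: "I \<noteq> 0" by (simp add: I_def vec_eq_iff mat_def)
  have DnI: "D \<notin> msp.span {I}"
  proof
    assume "D \<in> msp.span {I}"
    then obtain c where "D = mscale c I" by (auto simp: msp.span_singleton)
    hence "D $ i0 $ i0 = D $ i1 $ i1" by (simp add: I_def mscale_def mat_def)
    hence "d i0 = d i1" by (simp add: D_def diagm_def)
    with injd i01 show False by (simp add: inj_eq)
  qed
  have indI: "msp.independent {I}"
    using msp.independent_insertI[of I "{}"] I0 by simp
  have indID: "msp.independent {I, D}"
    using msp.independent_insertI[OF DnI indI] by (simp add: insert_commute)
  have IS: "I \<in> Sym2" by (simp add: I_def Sym2_def)
  have DS: "D \<in> Sym2" by (simp add: D_def Sym2_def diagm_def transpose_def vec_eq_iff)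
  obtain B where B: "{I, D} \<subseteq> B" "B \<subseteq> Sym2" "msp.independent B" "Sym2 \<subseteq> msp.span B"
    using msp.maximal_independent_subset_extend[of "{I, D}" Sym2] indID IS DS by auto
  have finB: "finite B"
    using msp.independent_span_bound[of "range (\<lambda>p. Emat (fst p) (snd p)) :: ('k^'n^'n) set" B]
      B(3) span_all by auto
  obtain bs where bs: "set bs = B - {I, D}" "distinct bs"
    using finite_distinct_list[of "B - {I, D}"] finB by auto
  define L where "L = I # D # bs"
  have IneD: "I \<noteq> D" using DnI msp.span_base[of I "{I}"] by auto
  have distL: "distinct L" using bs IneD by (auto simp: L_def)
  have setL: "set L = B" using bs B(1) by (auto simp: L_def)
  have dimS: "msp.dim (Sym2 :: ('k^'n^'n) set) = length L"
    using msp.basis_card_eq_dim[OF B(2) B(4) B(3)] distinct_card[OF distL] setL by simp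
  define F where "F = (\<lambda>i. msp.span (set (take i L)))"
  have spanB: "msp.span B = Sym2"
    using msp.span_minimal[OF B(2) subspace_Sym2] B(4) by auto
  have cf: "complete_flag F"
    unfolding complete_flag_def
  proof (intro conjI allI impI)
    fix i assume i: "i \<le> msp.dim (Sym2 :: ('k^'n^'n) set)"
    show "msp.subspace (F i)" by (simp add: F_def)
    show "F i \<subseteq> Sym2" unfolding F_def
      using setL B(2) set_take_subset[of i L] by (intro msp.span_minimal subspace_Sym2) auto
    have "msp.independent (set (take i L))"
      using msp.independent_mono[OF B(3)] setL set_take_subset[of i L] by auto
    hence "msp.dim (F i) = card (set (take i L))"
      unfolding F_def by (rule msp.dim_span_eq_card_independent)
    also have "\<dots> = i" using distinct_card[OF distinct_take[OF distL]] i dimS by simp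
    finally show "msp.dim (F i) = i" .
  next
    fix i assume "i < msp.dim (Sym2 :: ('k^'n^'n) set)"
    show "F i \<subseteq> F (Suc i)" unfolding F_def
      by (intro msp.span_mono set_take_subset_set_take) simp
  next
    show "F (msp.dim (Sym2 :: ('k^'n^'n) set)) = Sym2"
      unfolding F_def dimS using setL spanB by simp
  qed
  have N2: "2 \<le> msp.dim (Sym2 :: ('k^'n^'n) set)" using dimS by (simp add: L_def)
  have F1: "F 1 = msp.span {I}" by (simp add: F_def L_def)
  have F2: "F 2 = msp.span {I, D}" by (simp add: F_def L_def numeral_2_eq_2)
  define S where "S = {0} \<union> {x :: 'k. x ^ (2 * CARD('n)) = 1}"
  have finS: "finite S" unfolding S_def by (simp add: finite_unity)
  have "flag_stabilizer_SL F \<subseteq> {g. \<forall>i j. g $ i $ j \<in> S}"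
  proof
    fix g assume g: "g \<in> flag_stabilizer_SL F"
    hence dg: "det g = 1" and st: "\<And>i. i \<le> msp.dim (Sym2 :: ('k^'n^'n) set) \<Longrightarrow> sym2_act g ` F i = F i"
      by (auto simp: flag_stabilizer_SL_def)
    have "sym2_act g I \<in> F 1" using st[of 1] N2 F1 msp.span_base[of I "{I}"] by auto
    then obtain l where h1: "g ** transpose g = mscale l (mat 1)"
      using F1 by (auto simp: msp.span_singleton sym2_act_def I_def)
    have "sym2_act g D \<in> F 2" using st[of 2] N2 F2 msp.span_base[of D "{I, D}"] by auto
    then obtain a where "sym2_act g D - mscale a I \<in> msp.span {D}"
      using F2 by (auto simp: msp.span_breakdown_eq)
    then obtain b where "sym2_act g D - mscale a I = mscale b D"
      by (auto simp: msp.span_singleton)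
    hence h2: "g ** diagm d ** transpose g = mscale a (mat 1) + mscale b (diagm d)"
      by (simp add: sym2_act_def D_def I_def algebra_simps)
    show "g \<in> {g. \<forall>i j. g $ i $ j \<in> S}"
      using stab_entries[OF dg injd h1 h2] by (auto simp: S_def)
  qed
  hence "finite (flag_stabilizer_SL F)" using finite_mats[OF finS] finite_subset by blast
  with cf show ?thesis by blast
qed

end
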